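(* In the Bernoulli setting with $\mathscr{A}_{\mathrm{sing}},\mathscr{A}_{\mathrm{inv}}$ both nonempty, let $\eta$ be the unique $\mathcal{Q}$-stationary probability measure on $\mathbb{P}^1$. Then $p\times\eta$ is $\bar{\mathcal{Q}}$-stationary and $\bar{\mathcal{Q}}$ is uniformly ergodic: there exist constants $c>0$, $C<\infty$ such that $$\Big\|\bar{\mathcal{Q}}^n\varphi-\int\varphi\,d(p\times\eta)\Big\|_\infty\le Ce^{-cn}\|\varphi\|_\infty\quad\forall n\in\mathbb{N},\ \forall\varphi\in L^\infty(\mathscr{A}\times\mathbb{P}^1).$$ In particular $p\times\eta$ is the unique $\bar{\mathcal{Q}}$-stationary measure.
   Context: $\mathscr{A}=\{1,\dots,k\}=\mathscr{A}_{\mathrm{sing}}\sqcup\mathscr{A}_{\mathrm{inv}}$ both nonempty, $p$ a probability vector with all $p_i>0$, $\underline A=(A_i)$ with $\mathrm{rank}A_i=1$ for $i\in\mathscr{A}_{\mathrm{sing}}$ and $A_i$ invertible for $i\in\mathscr{A}_{\mathrm{inv}}$. Projective action: $\hat A\hat v=\widehat{Av}$ (invertible), constant map to $\widehat{\mathrm{Range}A}$ (rank one). $\mathcal{Q}\psi(\hat v)=\sum_ip_i\psi(\hat A_i\hat v)$ on $L^\infty(\mathbb{P}^1)$; $\bar{\mathcal{Q}}\varphi(j,\hat v)=\sum_ip_i\varphi(i,\hat A_j\hat v)$ on $L^\infty(\mathscr{A}\times\mathbb{P}^1)$. A measure $\nu$ is stationary for an operator $T$ if $\int T\varphi\,d\nu=\int\varphi\,d\nu$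 for all bounded measurable $\varphi$. *)

theory Defs
  imports "HOL-Analysis.Analysis" "HOL-Probability.Probability"
begin

text \<open>The real projective line, realised as the set of unit vectors of R^2 in the
  "upper half" (one representative per line through the origin).\<close>

definition P1 :: "(real^2) set" where
  "P1 = {v. norm v = 1 \<and> (v$2 > 0 \<or> (v$2 = 0 \<and> v$1 > 0))}"

text \<open>The point of P1 (line) spanned by a nonzero vector.\<close>
definition proj :: "real^2 \<Rightarrow> real^2" where
  "proj v = (let u = v /\<^sub>R norm v in if u \<in> P1 then u else - u)"

text \<open>Measurable structure of P1: Borel sets of the quotient (subspace of the sphere).\<close>
definition P1M :: "(real^2) measure" where
  "P1M = restrict_space borel P1"

text \<open>Projective action: for invertible A, the induced map on lines; otherwise
  (rank one) the constant map onto the line Range A.\<close>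
definition pact :: "real^2^2 \<Rightarrow> real^2 \<Rightarrow> real^2" where
  "pact A x = (if invertible A then proj (A *v x)
               else proj (SOME w. w \<in> range ((*v) A) \<and> w \<noteq> 0))"

definition Qop :: "nat \<Rightarrow> (nat \<Rightarrow> real) \<Rightarrow> (nat \<Rightarrow> real^2^2) \<Rightarrow>
    (real^2 \<Rightarrow> real) \<Rightarrow> real^2 \<Rightarrow> real" where
  "Qop k p A \<psi> x = (\<Sum>i\<in>{1..k}. p i * \<psi> (pact (A i) x))"

definition Qbar :: "nat \<Rightarrow> (nat \<Rightarrow> real) \<Rightarrow> (nat \<Rightarrow> real^2^2) \<Rightarrow>
    (nat \<times> (real^2) \<Rightarrow> real) \<Rightarrow> nat \<times> (real^2) \<Rightarrow> real" where
  "Qbar k p A \<phi> z = (\<Sum>i\<in>{1..k}. p i * \<phi> (i, pact (A (fst z)) (snd z)))"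

text \<open>Measurable space of the alphabet times P1.\<close>
definition AP1M :: "nat \<Rightarrow> (nat \<times> (real^2)) measure" where
  "AP1M k = count_space {1..k} \<Otimes>\<^sub>M P1M"

text \<open>The measure p on the alphabet.\<close>
definition pmeas :: "nat \<Rightarrow> (nat \<Rightarrow> real) \<Rightarrow> nat measure" where
  "pmeas k p = density (count_space {1..k}) (\<lambda>i. ennreal (p i))"

text \<open>nu is T-stationary on the measurable space M: integrals of T phi and phi agree
  for every bounded measurable phi.\<close>
definition stationary :: "'a measure \<Rightarrow> (('a \<Rightarrow> real) \<Rightarrow> 'a \<Rightarrow> real) \<Rightarrow> 'a measure \<Rightarrow> bool" where
  "stationary M T \<nu> \<longleftrightarrow> sets \<nu> = sets M \<and>
     (\<forall>\<phi> \<in> borel_measurable M. bounded (\<phi> ` space M) \<longrightarrow>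
        (\<integral>x. T \<phi> x \<partial>\<nu>) = (\<integral>x. \<phi> x \<partial>\<nu>))"

text \<open>Sup norm of a bounded function on the space of M.\<close>
definition supnorm :: "'a measure \<Rightarrow> ('a \<Rightarrow> real) \<Rightarrow> real" where
  "supnorm M \<phi> = (SUP x\<in>space M. \<bar>\<phi> x\<bar>)"

end

theory Submission
  imports Defs
begin


lemma space_P1M[simp]: "space P1M = P1"
  by (simp add: P1M_def space_restrict_space)

lemma zero_notin_P1: "v \<in> P1 \<Longrightarrow> v \<noteq> 0"
  by (auto simp: P1_def)

lemma vec2_zero: "(v::real^2) $ 1 = 0 \<Longrightarrow> v $ 2 = 0 \<Longrightarrow> v = 0"
  by (simp add: vec_eq_iff forall_2)

lemma proj_in_P1: assumes "v \<noteq> 0" shows "proj v \<in> P1"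
proof -
  define u where "u = v /\<^sub>R norm v"
  have nu: "norm u = 1" using assms by (simp add: u_def)
  have "u \<in> P1 \<or> - u \<in> P1"
  proof (cases "u \<in> P1")
    case False
    then have "\<not> (u$2 > 0 \<or> (u$2 = 0 \<and> u$1 > 0))" using nu by (auto simp: P1_def)
    moreover have "\<not> (u$1 = 0 \<and> u$2 = 0)" using nu vec2_zero by force
    ultimately have "(-u)$2 > 0 \<or> ((-u)$2 = 0 \<and> (-u)$1 > 0)" by auto
    then show ?thesis using nu by (auto simp: P1_def)
  qed auto
  then show ?thesis unfolding proj_def Let_def u_def[symmetric] by auto
qed

lemma P1_sets: "P1 \<in> sets borel"
proof -
  have "P1 = {v::real^2. norm v = 1} \<inter> ({v. v$2 > 0} \<union> ({v. v$2 = 0} \<inter> {v. v$1 > 0}))"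
    by (auto simp: P1_def)
  also have "\<dots> \<in> sets borel" by measurable
  finally show ?thesis .
qed

lemma proj_meas: "proj \<in> borel_measurable borel"
proof -
  have "proj = (\<lambda>v. if v /\<^sub>R norm v \<in> P1 then v /\<^sub>R norm v else - (v /\<^sub>R norm v))"
    by (auto simp: proj_def Let_def fun_eq_iff)
  also have "\<dots> \<in> borel_measurable borel"
    using P1_sets by measurable
  finally show ?thesis .
qed

lemma inv_nonzero: "invertible (B::real^2^2) \<Longrightarrow> v \<noteq> 0 \<Longrightarrow> B *v v \<noteq> 0"
  by (metis invertible_def matrix_vector_mul_assoc matrix_vector_mul_lid matrix_vector_mult_0_right)

lemma rank1: assumes "rank (B::real^2^2) = 1"
  shows "\<not> invertible B" "\<exists>w. w \<in> range ((*v) B) \<and> w \<noteq> 0"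
proof -
  show "\<not> invertible B"
  proof
    assume "invertible B"
    then have "inj ((*v) B)"
      using matrix_left_invertible_injective invertible_def by blast
    then have "rank B = 2" using full_rank_injective[of B] by simp
    with assms show False by simp
  qed
  show "\<exists>w. w \<in> range ((*v) B) \<and> w \<noteq> 0"
  proof (rule ccontr)
    assume "\<not> ?thesis"
    then have "\<forall>x. B *v x = 0" by auto
    then have "B = 0"
      by (subst matrix_eq) simp
    with assms show False by simp
  qed
qed

lemma pact_const: "\<not> invertible B \<Longrightarrow> pact B x = pact B y"
  by (simp add: pact_def)

lemma pact_in_P1:
  assumes "invertible B \<or> rank B = 1" "v \<in> P1" shows "pact B v \<in> P1"
  using assms(1)
proof
  assume "invertible B" then show ?thesis
    using assms(2) by (simp add: pact_def proj_in_P1 inv_nonzero zero_notin_P1)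
next
  assume r: "rank B = 1"
  then have "\<exists>w. w \<in> range ((*v) B) \<and> w \<noteq> 0" by (rule rank1)
  then have "(SOME w. w \<in> range ((*v) B) \<and> w \<noteq> 0) \<noteq> 0" by (metis (mono_tags, lifting) someI_ex)
  then show ?thesis using rank1(1)[OF r] by (simp add: pact_def proj_in_P1)
qed

lemma pact_meas_borel: "pact B \<in> borel_measurable borel"
proof (cases "invertible B")
  case True
  have "pact B = (\<lambda>x. proj (B *v x))" using True by (simp add: pact_def fun_eq_iff)
  also have "\<dots> \<in> borel_measurable borel"
    by (intro measurable_compose[OF _ proj_meas] borel_measurable_continuous_onI
          linear_continuous_on matrix_vector_mul_bounded_linear)
  finally show ?thesis .
next
  case False
  then have "pact B = (\<lambda>_. pact B 0)" using pact_const[OF False] by auto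
  then show ?thesis by (metis measurable_const space_borel UNIV_I)
qed

lemma pact_meas:
  assumes "invertible B \<or> rank B = 1" shows "pact B \<in> P1M \<rightarrow>\<^sub>M P1M"
  unfolding P1M_def
  by (rule measurable_restrict_space3[OF pact_meas_borel]) (use pact_in_P1[OF assms] in auto)



lemma prob_dev_bound:
  fixes g :: "'a \<Rightarrow> real"
  assumes "prob_space N" "g \<in> borel_measurable N" "\<And>x. x \<in> space N \<Longrightarrow> \<bar>g x - m\<bar> \<le> D"
  shows "\<bar>(\<integral>x. g x \<partial>N) - m\<bar> \<le> D"
proof -
  interpret prob_space N by fact
  have b: "\<bar>g x\<bar> \<le> \<bar>m\<bar> + D" if "x \<in> space N" for x
    using assms(3)[OF that] by linarith
  have b2: "g x \<le> m + D" "m - D \<le> g x" if "x \<in> space N" for x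
    using assms(3)[OF that] by linarith+
  have int: "integrable N g"
    by (rule integrable_const_bound[where B="\<bar>m\<bar> + D"]) (use assms(2) b in \<open>auto intro!: AE_I2\<close>)
  have "(\<integral>x. g x \<partial>N) \<le> (\<integral>x. m + D \<partial>N)"
    by (rule integral_mono[OF int]) (use b2 in auto)
  moreover have "(\<integral>x. m - D \<partial>N) \<le> (\<integral>x. g x \<partial>N)"
    by (rule integral_mono[OF _ int]) (use b2 in auto)
  ultimately show ?thesis by (simp add: prob_space) 
qed

lemma zero_by_geom:
  fixes x K q :: real
  assumes "0 < q" "q < 1" "\<And>n. \<bar>x\<bar> \<le> K * q ^ n"
  shows "x = 0"
proof -
  have "(\<lambda>n. K * q ^ n) \<longlonglongrightarrow> K * 0"
    by (intro tendsto_mult tendsto_const LIMSEQ_power_zero) (use assms in auto)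
  then have "\<bar>x\<bar> \<le> K * 0"
    by (rule LIMSEQ_le_const) (use assms in auto)
  then show ?thesis by simp
qed


locale bern =
  fixes k :: nat and p :: "nat \<Rightarrow> real" and A :: "nat \<Rightarrow> real^2^2"
    and Asing Ainv :: "nat set" and \<eta> :: "(real^2) measure"
  assumes part: "Asing \<union> Ainv = {1..k}" "Asing \<inter> Ainv = {}"
    and ne: "Asing \<noteq> {}" "Ainv \<noteq> {}"
    and ppos: "\<And>i. i \<in> {1..k} \<Longrightarrow> p i > 0"
    and psum: "(\<Sum>i\<in>{1..k}. p i) = 1"
    and sing: "\<And>i. i \<in> Asing \<Longrightarrow> rank (A i) = 1"
    and inv: "\<And>i. i \<in> Ainv \<Longrightarrow> invertible (A i)"
    and eta_prob: "prob_space \<eta>"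
    and eta_stat: "stationary P1M (Qop k p A) \<eta>"
begin

abbreviation "S \<equiv> {1..k} \<times> P1"
abbreviation "M \<equiv> AP1M k"
abbreviation "T \<equiv> Qbar k p A"
abbreviation "\<mu> \<equiv> pmeas k p \<Otimes>\<^sub>M \<eta>"
definition "q = (\<Sum>i\<in>Ainv. p i)"
definition "G \<psi> w = (\<Sum>i\<in>{1..k}. p i * \<psi> (i, w))"

lemma good: "j \<in> {1..k} \<Longrightarrow> invertible (A j) \<or> rank (A j) = 1"
  using part sing inv by blast

lemma space_M[simp]: "space M = S"
  by (simp add: AP1M_def space_pair_measure)

lemma sets_eta: "sets \<eta> = sets P1M"
  using eta_stat by (simp add: stationary_def)

lemma space_eta[simp]: "space \<eta> = P1"
  using sets_eq_imp_space_eq[OF sets_eta] by simp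

lemma pmeas_prob: "prob_space (pmeas k p)"
proof (rule prob_spaceI)
  have "emeasure (pmeas k p) (space (pmeas k p)) = (\<Sum>i\<in>{1..k}. ennreal (p i))"
    by (simp add: pmeas_def emeasure_density nn_integral_count_space_finite)
  also have "\<dots> = ennreal (\<Sum>i\<in>{1..k}. p i)"
    using ppos by (intro sum_ennreal) (auto intro: less_imp_le)
  finally show "emeasure (pmeas k p) (space (pmeas k p)) = 1" using psum by simp
qed

lemma mu_prob: "prob_space \<mu>"
  by (rule prob_space_pair[OF pmeas_prob eta_prob])

lemma sets_mu: "sets \<mu> = sets M"
  unfolding AP1M_def
  by (rule sets_pair_measure_cong) (simp_all add: pmeas_def sets_eta)

lemma space_mu[simp]: "space \<mu> = S"
  using sets_eq_imp_space_eq[OF sets_mu] by simp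

lemma slice_meas: "\<phi> \<in> borel_measurable M \<Longrightarrow> i \<in> {1..k} \<Longrightarrow> (\<lambda>v. \<phi> (i, v)) \<in> borel_measurable P1M"
  unfolding AP1M_def
  by (rule measurable_compose[OF measurable_Pair1']) simp_all

lemma T_meas:
  assumes "\<phi> \<in> borel_measurable M" shows "T \<phi> \<in> borel_measurable M"
  unfolding AP1M_def
proof (rule measurable_pair_measure_countable1)
  fix j assume j: "j \<in> {1..k}"
  show "(\<lambda>v. T \<phi> (j, v)) \<in> borel_measurable P1M"
    unfolding Qbar_def fst_conv snd_conv
    by (intro borel_measurable_sum borel_measurable_times measurable_const
        measurable_compose[OF pact_meas[OF good[OF j]] slice_meas[OF assms]]) auto
qed simp

lemma T_bound:
  assumes "\<And>z. z \<in> S \<Longrightarrow> \<bar>\<phi> z\<bar> \<le> B" "z \<in> S"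
  shows "\<bar>T \<phi> z\<bar> \<le> B"
proof -
  obtain j v where z: "z = (j, v)" "j \<in> {1..k}" "v \<in> P1" using assms(2) by auto
  have pv: "pact (A j) v \<in> P1" using pact_in_P1[OF good[OF z(2)] z(3)] .
  have "\<bar>T \<phi> z\<bar> \<le> (\<Sum>i\<in>{1..k}. \<bar>p i * \<phi> (i, pact (A j) v)\<bar>)"
    unfolding z Qbar_def by (simp add: sum_abs)
  also have "\<dots> \<le> (\<Sum>i\<in>{1..k}. p i * B)"
  proof (intro sum_mono)
    fix i assume i: "i \<in> {1..k}"
    show "\<bar>p i * \<phi> (i, pact (A j) v)\<bar> \<le> p i * B"
      using ppos[OF i] assms(1)[of "(i, pact (A j) v)"] pv i by (simp add: abs_mult mult_left_mono)
  qed
  also have "\<dots> = B" using psum by (simp flip: sum_distrib_right)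
  finally show ?thesis .
qed

lemma Tn_meas: "\<phi> \<in> borel_measurable M \<Longrightarrow> (T ^^ n) \<phi> \<in> borel_measurable M"
  by (induction n) (auto intro: T_meas)

lemma Tn_bound:
  assumes "\<And>z. z \<in> S \<Longrightarrow> \<bar>\<phi> z\<bar> \<le> B" "z \<in> S"
  shows "\<bar>(T ^^ n) \<phi> z\<bar> \<le> B"
  using assms(2) by (induction n arbitrary: z) (auto intro: T_bound assms(1))

lemma integrable_eta:
  fixes B :: real
  assumes "g \<in> borel_measurable P1M" "\<And>v. v \<in> P1 \<Longrightarrow> \<bar>g v\<bar> \<le> B"
  shows "integrable \<eta> g"
proof -
  interpret prob_space \<eta> by (rule eta_prob)
  show ?thesis
    by (rule integrable_const_bound[where B=B]) 
       (use assms sets_eta in \<open>auto intro!: AE_I2 cong: measurable_cong_sets\<close>)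
qed

lemma int_mu:
  assumes f: "f \<in> borel_measurable M" and b: "\<And>z. z \<in> S \<Longrightarrow> \<bar>f z\<bar> \<le> B"
  shows "(\<integral>z. f z \<partial>\<mu>) = (\<Sum>i\<in>{1..k}. p i * (\<integral>v. f (i, v) \<partial>\<eta>))"
proof -
  interpret P: prob_space "pmeas k p" by (rule pmeas_prob)
  interpret E: prob_space \<eta> by (rule eta_prob)
  interpret pair_sigma_finite "pmeas k p" \<eta> by unfold_locales
  interpret MU: prob_space \<mu> by (rule mu_prob)
  have fm: "f \<in> borel_measurable \<mu>" using f sets_mu by (simp cong: measurable_cong_sets)
  have "integrable \<mu> f"
    by (rule MU.integrable_const_bound[where B=B]) (use b fm in \<open>auto intro!: AE_I2\<close>)
  then have "(\<integral>z. f z \<partial>\<mu>) = (\<integral>i. (\<integral>v. f (i, v) \<partial>\<eta>) \<partial>pmeas k p)"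
    by (simp add: integral_fst')
  also have "\<dots> = (\<integral>i. p i *\<^sub>R (\<integral>v. f (i, v) \<partial>\<eta>) \<partial>count_space {1..k})"
    unfolding pmeas_def
    by (rule integral_density) (use ppos in \<open>auto intro!: AE_I2 less_imp_le\<close>)
  also have "\<dots> = (\<Sum>i\<in>{1..k}. p i * (\<integral>v. f (i, v) \<partial>\<eta>))"
    by (simp add: lebesgue_integral_count_space_finite)
  finally show ?thesis .
qed


lemma bnd_of_bounded:
  fixes \<phi> :: "_ \<Rightarrow> real"
  assumes "bounded (\<phi> ` S)" obtains B where "\<And>z. z \<in> S \<Longrightarrow> \<bar>\<phi> z\<bar> \<le> B"
proof -
  obtain a where "\<forall>x\<in>\<phi> ` S. norm x \<le> a" using assms unfolding bounded_iff by auto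
  then show ?thesis using that[of a] by auto
qed

lemma bounded_of_bnd:
  assumes "\<And>z. z \<in> S \<Longrightarrow> \<bar>(\<phi>::_ \<Rightarrow> real) z\<bar> \<le> B" shows "bounded (\<phi> ` S)"
  unfolding bounded_iff using assms by auto

lemma int_eta_sum:
  fixes B :: real
  assumes "\<And>j. j \<in> {1..k} \<Longrightarrow> g j \<in> borel_measurable P1M"
    "\<And>j v. j \<in> {1..k} \<Longrightarrow> v \<in> P1 \<Longrightarrow> \<bar>g j v\<bar> \<le> B"
  shows "(\<integral>v. (\<Sum>j\<in>{1..k}. p j * g j v) \<partial>\<eta>) = (\<Sum>j\<in>{1..k}. p j * (\<integral>v. g j v \<partial>\<eta>))"
proof -
  have "(\<integral>v. (\<Sum>j\<in>{1..k}. p j * g j v) \<partial>\<eta>) = (\<Sum>j\<in>{1..k}. (\<integral>v. p j * g j v \<partial>\<eta>))"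
    by (rule Bochner_Integration.integral_sum) (use assms in \<open>auto intro!: integrable_mult_right integrable_eta\<close>)
  then show ?thesis by simp
qed

lemma stat_mu: "stationary M T \<mu>"
  unfolding stationary_def
proof (intro conjI ballI impI)
  show "sets \<mu> = sets M" by (rule sets_mu)
  fix \<phi> :: "nat \<times> (real^2) \<Rightarrow> real"
  assume fm: "\<phi> \<in> borel_measurable M" and "bounded (\<phi> ` space M)"
  then obtain B where B: "\<And>z. z \<in> S \<Longrightarrow> \<bar>\<phi> z\<bar> \<le> B" using bnd_of_bounded by auto
  define I where "I i j = (\<integral>v. \<phi> (i, pact (A j) v) \<partial>\<eta>)" for i j
  have gm: "(\<lambda>v. \<phi> (i, pact (A j) v)) \<in> borel_measurable P1M" if "i \<in> {1..k}" "j \<in> {1..k}" for i j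
    by (rule measurable_compose[OF pact_meas[OF good[OF that(2)]] slice_meas[OF fm that(1)]])
  have gb: "\<bar>\<phi> (i, pact (A j) v)\<bar> \<le> B" if "i \<in> {1..k}" "j \<in> {1..k}" "v \<in> P1" for i j v
    using B pact_in_P1[OF good[OF that(2)] that(3)] that(1) by auto
  have "(\<integral>z. T \<phi> z \<partial>\<mu>) = (\<Sum>j\<in>{1..k}. p j * (\<integral>v. T \<phi> (j, v) \<partial>\<eta>))"
    by (rule int_mu[OF T_meas[OF fm] T_bound[OF B]])
  also have "\<dots> = (\<Sum>j\<in>{1..k}. p j * (\<Sum>i\<in>{1..k}. p i * I i j))"
  proof (intro sum.cong refl arg_cong[where f="(*) (p _)"])
    fix j assume j: "j \<in> {1..k}"
    show "(\<integral>v. T \<phi> (j, v) \<partial>\<eta>) = (\<Sum>i\<in>{1..k}. p i * I i j)"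
      unfolding Qbar_def fst_conv snd_conv I_def
      by (rule int_eta_sum[where B=B]) (use gm gb j in auto)
  qed
  also have "\<dots> = (\<Sum>i\<in>{1..k}. p i * (\<Sum>j\<in>{1..k}. p j * I i j))"
    by (simp add: sum_distrib_left, subst sum.swap, simp add: mult.left_commute)
  also have "\<dots> = (\<Sum>i\<in>{1..k}. p i * (\<integral>v. \<phi> (i, v) \<partial>\<eta>))"
  proof (intro sum.cong refl arg_cong[where f="(*) (p _)"])
    fix i assume i: "i \<in> {1..k}"
    have "(\<Sum>j\<in>{1..k}. p j * I i j) = (\<integral>v. Qop k p A (\<lambda>v. \<phi> (i, v)) v \<partial>\<eta>)"
      unfolding Qop_def I_def
      by (rule int_eta_sum[where B=B, symmetric]) (use gm gb i in auto)
    also have "\<dots> = (\<integral>v. \<phi> (i, v) \<partial>\<eta>)"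
    proof -
      have bi: "bounded ((\<lambda>v. \<phi> (i, v)) ` space P1M)" unfolding bounded_iff using B i by (auto intro!: exI[of _ B])
      have "\<forall>\<psi>\<in>borel_measurable P1M. bounded (\<psi> ` space P1M) \<longrightarrow>
          (\<integral>x. Qop k p A \<psi> x \<partial>\<eta>) = (\<integral>x. \<psi> x \<partial>\<eta>)"
        using eta_stat by (simp add: stationary_def)
      from this[rule_format, OF slice_meas[OF fm i] bi] show ?thesis .
    qed
    finally show "(\<Sum>j\<in>{1..k}. p j * I i j) = (\<integral>v. \<phi> (i, v) \<partial>\<eta>)" .
  qed
  also have "\<dots> = (\<integral>z. \<phi> z \<partial>\<mu>)"
    by (rule int_mu[OF fm B, symmetric])
  finally show "(\<integral>z. T \<phi> z \<partial>\<mu>) = (\<integral>z. \<phi> z \<partial>\<mu>)" .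
qed

end



context bern begin

lemma T_G: "T \<psi> (j, v) = G \<psi> (pact (A j) v)"
  by (simp add: Qbar_def G_def)

lemma q_props: "0 < q" "q < 1"
proof -
  have fin: "finite Asing" "finite Ainv" using part(1) by (metis finite_Un finite_atLeastAtMost)+
  have pa: "\<And>i. i \<in> Ainv \<Longrightarrow> 0 < p i" "\<And>i. i \<in> Asing \<Longrightarrow> 0 < p i" by (metis Un_iff ppos part(1))+
  have qa: "0 < q" unfolding q_def by (rule sum_pos[OF fin(2) ne(2) pa(1)])
  have sa: "0 < (\<Sum>i\<in>Asing. p i)" by (rule sum_pos[OF fin(1) ne(1) pa(2)])
  have "1 = (\<Sum>i\<in>Asing. p i) + q"
    unfolding q_def psum[symmetric] part(1)[symmetric] by (rule sum.union_disjoint[OF fin part(2)])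
  with qa sa show "0 < q" "q < 1" by auto
qed

lemma contract:
  assumes B: "\<And>z. z \<in> S \<Longrightarrow> \<bar>\<phi> z\<bar> \<le> B"
  shows "w \<in> P1 \<Longrightarrow> w' \<in> P1 \<Longrightarrow> \<bar>G ((T ^^ n) \<phi>) w - G ((T ^^ n) \<phi>) w'\<bar> \<le> 2 * B * q ^ n"
proof (induction n arbitrary: w w')
  case 0
  have "\<bar>G \<phi> w - G \<phi> w'\<bar> = \<bar>\<Sum>i\<in>{1..k}. p i * (\<phi> (i, w) - \<phi> (i, w'))\<bar>"
    by (simp add: G_def sum_subtractf right_diff_distrib)
  also have "\<dots> \<le> (\<Sum>i\<in>{1..k}. \<bar>p i * (\<phi> (i, w) - \<phi> (i, w'))\<bar>)" by (rule sum_abs)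
  also have "\<dots> \<le> (\<Sum>i\<in>{1..k}. p i * (2 * B))"
  proof (rule sum_mono)
    fix i assume i: "i \<in> {1..k}"
    have "\<bar>\<phi> (i, w) - \<phi> (i, w')\<bar> \<le> 2 * B"
      using B[of "(i, w)"] B[of "(i, w')"] i 0 by auto
    then show "\<bar>p i * (\<phi> (i, w) - \<phi> (i, w'))\<bar> \<le> p i * (2 * B)"
      using ppos[OF i] by (simp add: abs_mult mult_left_mono)
  qed
  also have "\<dots> = 2 * B" using psum by (simp flip: sum_distrib_right)
  finally show ?case by simp
next
  case (Suc n)
  define \<psi> where "\<psi> = (T ^^ n) \<phi>"
  define d where "d i = \<bar>G \<psi> (pact (A i) w) - G \<psi> (pact (A i) w')\<bar>" for i
  have fin: "finite Asing" "finite Ainv" using part(1) by (metis finite_Un finite_atLeastAtMost)+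
  have "\<bar>G ((T ^^ Suc n) \<phi>) w - G ((T ^^ Suc n) \<phi>) w'\<bar>
      = \<bar>\<Sum>i\<in>{1..k}. p i * (G \<psi> (pact (A i) w) - G \<psi> (pact (A i) w'))\<bar>"
    by (simp add: G_def T_G \<psi>_def sum_subtractf right_diff_distrib)
  also have "\<dots> \<le> (\<Sum>i\<in>{1..k}. \<bar>p i * (G \<psi> (pact (A i) w) - G \<psi> (pact (A i) w'))\<bar>)"
    by (rule sum_abs)
  also have "\<dots> = (\<Sum>i\<in>{1..k}. p i * d i)"
    using ppos by (intro sum.cong refl) (simp add: d_def abs_mult less_imp_le)
  also have "\<dots> = (\<Sum>i\<in>Asing. p i * d i) + (\<Sum>i\<in>Ainv. p i * d i)"
    unfolding part(1)[symmetric] by (rule sum.union_disjoint[OF fin part(2)])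
  also have "(\<Sum>i\<in>Asing. p i * d i) = 0"
    using sing rank1(1) by (intro sum.neutral) (auto simp: d_def pact_const[of _ w w'])
  also have "(\<Sum>i\<in>Ainv. p i * d i) \<le> (\<Sum>i\<in>Ainv. p i * (2 * B * q ^ n))"
  proof (rule sum_mono)
    fix i assume i: "i \<in> Ainv"
    then have i': "i \<in> {1..k}" using part(1) by auto
    have "d i \<le> 2 * B * q ^ n" unfolding d_def \<psi>_def
      by (rule Suc.IH) (use pact_in_P1[OF good[OF i']] Suc.prems in auto)
    then show "p i * d i \<le> p i * (2 * B * q ^ n)" using ppos[OF i'] by (simp add: mult_left_mono)
  qed
  also have "\<dots> = 2 * B * q ^ Suc n" by (simp add: q_def flip: sum_distrib_right)
  finally show ?case by simp
qed

lemma diff_bound: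
  assumes B: "\<And>z. z \<in> S \<Longrightarrow> \<bar>\<phi> z\<bar> \<le> B" and z: "z \<in> S" "z' \<in> S"
  shows "\<bar>(T ^^ n) \<phi> z - (T ^^ n) \<phi> z'\<bar> \<le> 2 * B * q ^ n / q"
proof (cases n)
  case 0
  have B0: "0 \<le> B" using B[OF z(1)] by linarith
  have "2 * B * q \<le> 2 * B" using mult_left_mono[of q 1 "2 * B"] B0 q_props by simp
  then have "2 * B \<le> 2 * B / q" using q_props by (simp add: le_divide_eq)
  moreover have "\<bar>\<phi> z - \<phi> z'\<bar> \<le> 2 * B" using B[OF z(1)] B[OF z(2)] by linarith
  ultimately show ?thesis using 0 by simp
next
  case (Suc m)
  obtain j v j' v' where zz: "z = (j, v)" "z' = (j', v')" "j \<in> {1..k}" "v \<in> P1" "j' \<in> {1..k}" "v' \<in> P1"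
    using z by auto
  have "\<bar>(T ^^ n) \<phi> z - (T ^^ n) \<phi> z'\<bar>
     = \<bar>G ((T ^^ m) \<phi>) (pact (A j) v) - G ((T ^^ m) \<phi>) (pact (A j') v')\<bar>"
    by (simp add: Suc zz T_G)
  also have "\<dots> \<le> 2 * B * q ^ m"
    by (rule contract[OF B]) (use pact_in_P1 good zz in auto)
  also have "\<dots> = 2 * B * q ^ n / q" using q_props by (simp add: Suc)
  finally show ?thesis .
qed

lemma stat_iter:
  assumes st: "stationary M T \<nu>" and fm: "\<phi> \<in> borel_measurable M"
    and B: "\<And>z. z \<in> S \<Longrightarrow> \<bar>\<phi> z\<bar> \<le> B"
  shows "(\<integral>z. (T ^^ n) \<phi> z \<partial>\<nu>) = (\<integral>z. \<phi> z \<partial>\<nu>)"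
proof (induction n)
  case (Suc n)
  have "\<forall>\<phi>\<in>borel_measurable M. bounded (\<phi> ` space M) \<longrightarrow>
          (\<integral>x. T \<phi> x \<partial>\<nu>) = (\<integral>x. \<phi> x \<partial>\<nu>)"
    using st by (simp add: stationary_def)
  from this[rule_format, OF Tn_meas[OF fm, of n]] 
  have "(\<integral>x. T ((T ^^ n) \<phi>) x \<partial>\<nu>) = (\<integral>x. (T ^^ n) \<phi> x \<partial>\<nu>)"
    using bounded_of_bnd[of "(T ^^ n) \<phi>" B] Tn_bound[OF B] by auto
  with Suc show ?case by simp
qed simp

lemma conv_bound:
  assumes fm: "\<phi> \<in> borel_measurable M" and B: "\<And>z. z \<in> S \<Longrightarrow> \<bar>\<phi> z\<bar> \<le> B" and z: "z \<in> S"
  shows "\<bar>(T ^^ n) \<phi> z - (\<integral>w. \<phi> w \<partial>\<mu>)\<bar> \<le> 2 * B * q ^ n / q"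
proof -
  have "\<bar>(\<integral>w. (T ^^ n) \<phi> w \<partial>\<mu>) - (T ^^ n) \<phi> z\<bar> \<le> 2 * B * q ^ n / q"
  proof (rule prob_dev_bound[OF mu_prob])
    show "(T ^^ n) \<phi> \<in> borel_measurable \<mu>"
      using Tn_meas[OF fm] sets_mu by (simp cong: measurable_cong_sets)
    fix x assume "x \<in> space \<mu>"
    then show "\<bar>(T ^^ n) \<phi> x - (T ^^ n) \<phi> z\<bar> \<le> 2 * B * q ^ n / q"
      using diff_bound[OF B _ z] by simp
  qed
  then show ?thesis using stat_iter[OF stat_mu fm B] by (simp add: abs_minus_commute)
qed

end



context bern begin

lemma supnorm_bound:
  fixes \<phi> :: "_ \<Rightarrow> real"
  assumes "bounded (\<phi> ` space M)" "z \<in> S"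
  shows "\<bar>\<phi> z\<bar> \<le> supnorm M \<phi>"
proof -
  obtain a where a: "\<And>z. z \<in> S \<Longrightarrow> \<bar>\<phi> z\<bar> \<le> a" using bnd_of_bounded assms(1) by auto
  have "bdd_above ((\<lambda>x. \<bar>\<phi> x\<bar>) ` space M)" by (rule bdd_aboveI2[where M=a]) (use a in auto)
  then show ?thesis unfolding supnorm_def using assms(2) by (intro cSUP_upper) auto
qed

lemma exp_q: "exp (- (- ln q) * real n) = q ^ n"
proof -
  have "exp (- (- ln q) * real n) = exp (real n * ln q)" by (simp add: mult.commute)
  also have "\<dots> = exp (ln q) ^ n" by (rule exp_of_nat_mult)
  also have "\<dots> = q ^ n" using q_props by simp
  finally show ?thesis .
qed

lemma ergodic:
  "\<exists>c>0. \<exists>C::real. \<forall>n::nat. \<forall>\<phi> \<in> borel_measurable (AP1M k).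
          bounded (\<phi> ` space (AP1M k)) \<longrightarrow>
          (\<forall>z \<in> space (AP1M k).
             \<bar>((Qbar k p A) ^^ n) \<phi> z - (\<integral>w. \<phi> w \<partial>(pmeas k p \<Otimes>\<^sub>M \<eta>))\<bar>
               \<le> C * exp (- c * real n) * supnorm (AP1M k) \<phi>)"
proof -
  have key: "\<bar>(T ^^ n) \<phi> z - (\<integral>w. \<phi> w \<partial>\<mu>)\<bar> \<le> 2 / q * exp (- (- ln q) * real n) * supnorm M \<phi>"
    if fm: "\<phi> \<in> borel_measurable M" and bd: "bounded (\<phi> ` space M)" and z: "z \<in> space M"
    for n :: nat and \<phi> :: "nat \<times> (real^2) \<Rightarrow> real" and z
  proof -
    have B: "\<And>z. z \<in> S \<Longrightarrow> \<bar>\<phi> z\<bar> \<le> supnorm M \<phi>" using supnorm_bound[OF bd] by blast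
    have "\<bar>(T ^^ n) \<phi> z - (\<integral>w. \<phi> w \<partial>\<mu>)\<bar> \<le> 2 * supnorm M \<phi> * q ^ n / q"
      using conv_bound[OF fm B] z by simp
    also have "\<dots> = 2 / q * exp (- (- ln q) * real n) * supnorm M \<phi>" unfolding exp_q by simp
    finally show ?thesis .
  qed
  have c: "0 < - ln q" using q_props by simp
  show ?thesis
    by (rule exI[of _ "- ln q"], rule conjI[OF c], rule exI[of _ "2 / q"]) (blast intro: key)
qed

lemma unique:
  assumes nu: "prob_space \<nu>" and st: "stationary M T \<nu>"
  shows "\<nu> = \<mu>"
proof (rule measure_eqI)
  have sn: "sets \<nu> = sets M" using st by (simp add: stationary_def)
  then show "sets \<nu> = sets \<mu>" using sets_mu by simp
  have spn: "space \<nu> = S" using sets_eq_imp_space_eq[OF sn] by simp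
  fix X assume X: "X \<in> sets \<nu>"
  then have XM: "X \<in> sets M" using sn by simp
  define \<phi> where "\<phi> = (indicator X :: nat \<times> (real^2) \<Rightarrow> real)"
  have fm: "\<phi> \<in> borel_measurable M" unfolding \<phi>_def using XM by simp
  have B: "\<And>z. z \<in> S \<Longrightarrow> \<bar>\<phi> z\<bar> \<le> 1" by (simp add: \<phi>_def indicator_def)
  have Xs: "X \<subseteq> S" using sets.sets_into_space[OF XM] by simp
  have m1: "(\<integral>z. \<phi> z \<partial>\<nu>) = measure \<nu> X" unfolding \<phi>_def using Xs spn by (simp add: Int_absorb2)
  have m2: "(\<integral>z. \<phi> z \<partial>\<mu>) = measure \<mu> X" unfolding \<phi>_def using Xs by (simp add: Int_absorb2)
  have "(\<integral>z. \<phi> z \<partial>\<nu>) - (\<integral>z. \<phi> z \<partial>\<mu>) = 0"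
  proof (rule zero_by_geom[OF q_props])
    fix n
    have "\<bar>(\<integral>z. (T ^^ n) \<phi> z \<partial>\<nu>) - (\<integral>z. \<phi> z \<partial>\<mu>)\<bar> \<le> 2 * 1 * q ^ n / q"
    proof (rule prob_dev_bound[OF nu])
      show "(T ^^ n) \<phi> \<in> borel_measurable \<nu>"
        using Tn_meas[OF fm] sn by (simp cong: measurable_cong_sets)
      fix x assume "x \<in> space \<nu>"
      then show "\<bar>(T ^^ n) \<phi> x - (\<integral>z. \<phi> z \<partial>\<mu>)\<bar> \<le> 2 * 1 * q ^ n / q"
        using conv_bound[OF fm B] spn by simp
    qed
    then show "\<bar>(\<integral>z. \<phi> z \<partial>\<nu>) - (\<integral>z. \<phi> z \<partial>\<mu>)\<bar> \<le> 2 / q * q ^ n"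
      using stat_iter[OF st fm B, of n] by simp
  qed
  then have eq: "measure \<nu> X = measure \<mu> X" using m1 m2 by simp
  interpret N: prob_space \<nu> by (rule nu)
  interpret MU: prob_space \<mu> by (rule mu_prob)
  from eq show "emeasure \<nu> X = emeasure \<mu> X"
    by (simp add: N.emeasure_eq_measure MU.emeasure_eq_measure)
qed

end

theorem corollary3p1:
  fixes k :: nat and p :: "nat \<Rightarrow> real" and A :: "nat \<Rightarrow> real^2^2"
    and Asing Ainv :: "nat set" and \<eta> :: "(real^2) measure"
  assumes part: "Asing \<union> Ainv = {1..k}" "Asing \<inter> Ainv = {}"
    and ne: "Asing \<noteq> {}" "Ainv \<noteq> {}"
    and ppos: "\<And>i. i \<in> {1..k} \<Longrightarrow> p i > 0"
    and psum: "(\<Sum>i\<in>{1..k}. p i) = 1"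
    and sing: "\<And>i. i \<in> Asing \<Longrightarrow> rank (A i) = 1"
    and inv: "\<And>i. i \<in> Ainv \<Longrightarrow> invertible (A i)"
    and eta_prob: "prob_space \<eta>"
    and eta_stat: "stationary P1M (Qop k p A) \<eta>"
  shows "stationary (AP1M k) (Qbar k p A) (pmeas k p \<Otimes>\<^sub>M \<eta>)
    \<and> (\<exists>c>0. \<exists>C::real. \<forall>n::nat. \<forall>\<phi> \<in> borel_measurable (AP1M k).
          bounded (\<phi> ` space (AP1M k)) \<longrightarrow>
          (\<forall>z \<in> space (AP1M k).
             \<bar>((Qbar k p A) ^^ n) \<phi> z - (\<integral>w. \<phi> w \<partial>(pmeas k p \<Otimes>\<^sub>M \<eta>))\<bar>
               \<le> C * exp (- c * real n) * supnorm (AP1M k) \<phi>))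
    \<and> (\<forall>\<nu>. prob_space \<nu> \<and> stationary (AP1M k) (Qbar k p A) \<nu> \<longrightarrow>
          \<nu> = pmeas k p \<Otimes>\<^sub>M \<eta>)"
proof -
  interpret bern k p A Asing Ainv \<eta>
    by (rule bern.intro) (use assms in auto)
  show ?thesis using stat_mu ergodic unique by blast
qed


end
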